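(* Let $\mathfrak g$ be a 4-dimensional real almost abelian Lie algebra admitting an LCS structure. Then $\mathfrak g$ is isomorphic to one of the following Lie algebras (basis $\{e_1,e_2,e_3,e_4\}$, only nonzero brackets listed): $\mathfrak h_3\times\mathbb R$: $[e_1,e_2]=e_3$; $\mathfrak n_4$: $[e_1,e_2]=e_3$, $[e_1,e_3]=e_4$; $\mathfrak r_{3,\lambda}\times\mathbb R$ ($\lambda\in\mathbb R$): $[e_1,e_2]=e_2$, $[e_1,e_3]=\lambda e_3$; $\mathfrak r_{4,\mu,\lambda}$ ($\mu\lambda\neq0$): $[e_1,e_2]=e_2$, $[e_1,e_3]=\mu e_3$, $[e_1,e_4]=\lambda e_4$; $\mathfrak r_3\times\mathbb R$: $[e_1,e_2]=e_2$, $[e_1,e_3]=e_2+e_3$; $\mathfrak r_{4,\lambda}$ ($\lambda\in\mathbb R$): $[e_1,e_2]=e_2$, $[e_1,e_3]=\lambda e_3$, $[e_1,e_4]=e_3+\lambda e_4$; $\mathfrak r_4$: $[e_1,e_2]=e_2$, $[e_1,e_3]=e_2+e_3$, $[e_1,e_4]=e_3+e_4$; $\mathfrak r'_{3,\lambda}\times\mathbb R$ ($\lambda\in\mathbb R$): $[e_1,e_2]=\lambda e_2-e_3$, $[e_1,e_3]=e_2+\lambda e_3$; $\mathfrak r'_{4,\mu,\lambda}$ ($\mu\neq0$, $\lambda\neq0$): $[e_1,e_2]=\mu e_2$, $[e_1,e_3]=\lambda e_3-e_4$, $[e_1,e_4]=e_3+\lambda e_4$.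
   Context: An almost abelian Lie algebra is a real Lie algebra with an abelian ideal of codimension one. An LCS structure on $\mathfrak g$ is a pair $(\omega,\theta)$ with $\omega\in\Lambda^2\mathfrak g^*$ non-degenerate and $\theta\in\mathfrak g^*$ closed and nonzero, such that $d\omega=\theta\wedge\omega$ ($d$ the Chevalley–Eilenberg differential). *)

theory Defs
  imports "HOL-Analysis.Analysis"
begin

definition lie_algebra :: "('a::real_vector \<Rightarrow> 'a \<Rightarrow> 'a) \<Rightarrow> bool" where
  "lie_algebra B \<longleftrightarrow> bilinear B \<and> (\<forall>x. B x x = 0) \<and>
     (\<forall>x y z. B x (B y z) + B y (B z x) + B z (B x y) = 0)"

definition almost_abelian :: "('a::euclidean_space \<Rightarrow> 'a \<Rightarrow> 'a) \<Rightarrow> bool" where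
  "almost_abelian B \<longleftrightarrow> (\<exists>I. subspace I \<and> dim I = DIM('a) - 1 \<and>
     (\<forall>x\<in>I. \<forall>y. B y x \<in> I) \<and> (\<forall>x\<in>I. \<forall>y\<in>I. B x y = 0))"

definition CE_d2 :: "('a \<Rightarrow> 'a \<Rightarrow> 'a) \<Rightarrow> ('a \<Rightarrow> 'a \<Rightarrow> real) \<Rightarrow> 'a \<Rightarrow> 'a \<Rightarrow> 'a \<Rightarrow> real" where
  "CE_d2 B w x y z = - w (B x y) z + w (B x z) y - w (B y z) x"

definition wedge12 :: "('a \<Rightarrow> real) \<Rightarrow> ('a \<Rightarrow> 'a \<Rightarrow> real) \<Rightarrow> 'a \<Rightarrow> 'a \<Rightarrow> 'a \<Rightarrow> real" where
  "wedge12 t w x y z = t x * w y z - t y * w x z + t z * w x y"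

text \<open>An LCS structure (w, t): w non-degenerate 2-form, t closed nonzero 1-form,
  d w = t \<and> w.  Closedness of t: (d t)(x,y) = - t([x,y]) = 0.\<close>
definition has_LCS :: "('a::real_vector \<Rightarrow> 'a \<Rightarrow> 'a) \<Rightarrow> bool" where
  "has_LCS B \<longleftrightarrow> (\<exists>(w::'a \<Rightarrow> 'a \<Rightarrow> real) (t::'a \<Rightarrow> real).
     bilinear w \<and> (\<forall>x. w x x = 0) \<and> (\<forall>x. (\<forall>y. w x y = 0) \<longrightarrow> x = 0) \<and>
     linear t \<and> (\<forall>x y. t (B x y) = 0) \<and> (\<exists>x. t x \<noteq> 0) \<and>
     (\<forall>x y z. CE_d2 B w x y z = wedge12 t w x y z))"

text \<open>(B is isomorphic to) the almost abelian Lie algebra with basis e1,...,e4 whose only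
  nonzero brackets are [e1,ej] = sum_{k=2..4} A j k ek (j = 2,3,4); i.e. there is a basis
  of 'a realising exactly this bracket table (for i < j; the rest follows by antisymmetry).\<close>
definition is_model :: "('a::real_vector \<Rightarrow> 'a \<Rightarrow> 'a) \<Rightarrow> (nat \<Rightarrow> nat \<Rightarrow> real) \<Rightarrow> bool" where
  "is_model B A \<longleftrightarrow> (\<exists>e::nat \<Rightarrow> 'a.
     inj_on e {1..4} \<and> independent (e ` {1..4}) \<and> span (e ` {1..4}) = UNIV \<and>
     (\<forall>j\<in>{2..4}. B (e 1) (e j) = (\<Sum>k=2..4. A j k *\<^sub>R e k)) \<and>
     (\<forall>i\<in>{2..4}. \<forall>j\<in>{2..4}. i < j \<longrightarrow> B (e i) (e j) = 0))"

text \<open>Matrix of ad(e1) on span(e2,e3,e4): row j-2 lists the coefficients of [e1,ej]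
  on e2, e3, e4.\<close>
definition adm :: "real list list \<Rightarrow> nat \<Rightarrow> nat \<Rightarrow> real" where
  "adm tbl j k = tbl ! (j - 2) ! (k - 2)"

definition h3R :: "nat \<Rightarrow> nat \<Rightarrow> real" where
  "h3R = adm [[0,1,0],[0,0,0],[0,0,0]]"
definition n4 :: "nat \<Rightarrow> nat \<Rightarrow> real" where
  "n4 = adm [[0,1,0],[0,0,1],[0,0,0]]"
definition r3R :: "real \<Rightarrow> nat \<Rightarrow> nat \<Rightarrow> real" where
  "r3R l = adm [[1,0,0],[0,l,0],[0,0,0]]"
definition r4ml :: "real \<Rightarrow> real \<Rightarrow> nat \<Rightarrow> nat \<Rightarrow> real" where
  "r4ml m l = adm [[1,0,0],[0,m,0],[0,0,l]]"
definition r3R' :: "nat \<Rightarrow> nat \<Rightarrow> real" where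
  "r3R' = adm [[1,0,0],[1,1,0],[0,0,0]]"
definition r4l :: "real \<Rightarrow> nat \<Rightarrow> nat \<Rightarrow> real" where
  "r4l l = adm [[1,0,0],[0,l,0],[0,1,l]]"
definition r4 :: "nat \<Rightarrow> nat \<Rightarrow> real" where
  "r4 = adm [[1,0,0],[1,1,0],[0,1,1]]"
definition r3primeR :: "real \<Rightarrow> nat \<Rightarrow> nat \<Rightarrow> real" where
  "r3primeR l = adm [[l,-1,0],[1,l,0],[0,0,0]]"
definition r4prime :: "real \<Rightarrow> real \<Rightarrow> nat \<Rightarrow> nat \<Rightarrow> real" where
  "r4prime m l = adm [[m,0,0],[0,l,-1],[0,1,l]]"

end

theory Submission
  imports Defs
begin

lemma cubic_bound:
  fixes p q r x :: real
  assumes x: "x \<ge> 1 + \<bar>p\<bar> + \<bar>q\<bar> + \<bar>r\<bar>"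
  shows "\<bar>p*x^2 + q*x + r\<bar> < x^3"
proof -
    have x1: "x \<ge> 1" using x by simp
    have "\<bar>p*x^2 + q*x + r\<bar> \<le> \<bar>p\<bar>*x^2 + \<bar>q\<bar>*x + \<bar>r\<bar>"
      proof -
      have "\<bar>p*x^2 + q*x + r\<bar> \<le> \<bar>p*x^2\<bar> + \<bar>q*x\<bar> + \<bar>r\<bar>"
        by (meson abs_triangle_ineq add_mono order_trans order_refl)
      also have "\<dots> = \<bar>p\<bar>*x^2 + \<bar>q\<bar>*x + \<bar>r\<bar>" using x1 by (simp add: abs_mult)
      finally show ?thesis .
    qed
    also have "\<dots> \<le> \<bar>p\<bar>*x^2 + \<bar>q\<bar>*x^2 + \<bar>r\<bar>*x^2"
      proof -
      have xx: "x \<le> x^2" "1 \<le> x^2" using x1 by (auto simp: power2_eq_square intro: order_trans[of _ x] mult_left_mono[of 1 x x, simplified])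
      have "\<bar>q\<bar>*x \<le> \<bar>q\<bar>*x^2" using xx by (simp add: mult_left_mono)
      moreover have "\<bar>r\<bar> \<le> \<bar>r\<bar>*x^2" using xx mult_left_mono[of 1 "x^2" "\<bar>r\<bar>"] by simp
      ultimately show ?thesis by simp
    qed
    also have "\<dots> < x * x^2"
    proof -
      have "\<bar>p\<bar> + \<bar>q\<bar> + \<bar>r\<bar> < x" using x by simp
      moreover have "x^2 > 0" using x1 by simp
      ultimately show ?thesis by (simp add: distrib_right[symmetric])
    qed
    finally show ?thesis by (simp add: power3_eq_cube power2_eq_square)
qed

lemma cubic_root:
  fixes p q r :: real
  shows "\<exists>a. a^3 + p*a^2 + q*a + r = 0"
proof -
  define R where "R = 1 + \<bar>p\<bar> + \<bar>q\<bar> + \<bar>r\<bar>"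
  define g where "g = (\<lambda>a::real. a^3 + p*a^2 + q*a + r)"
  have "g R > 0" using cubic_bound[of p q r R] unfolding g_def R_def by linarith
  moreover have "g (-R) < 0"
  proof -
    have "\<bar>(-p)*R^2 + q*R + (-r)\<bar> < R^3"
      using cubic_bound[of "-p" q "-r" R] unfolding R_def by simp
    then show ?thesis unfolding g_def by (simp add: power3_eq_cube power2_eq_square)
  qed
  moreover have "-R \<le> R" unfolding R_def by simp
  moreover have "continuous_on {-R..R} g" unfolding g_def by (intro continuous_intros)
  ultimately obtain a where "g a = 0"
    using IVT'[of g "-R" 0 R] by force
  then show ?thesis unfolding g_def by blast
qed


lemma eig3:
  fixes M :: "real^3^3"
  shows "\<exists>a x. x \<noteq> 0 \<and> M *v x = a *\<^sub>R x"
proof -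
  define p where "p = -(M$1$1 + M$2$2 + M$3$3)"
  define q where "q = M$1$1*M$2$2 + M$1$1*M$3$3 + M$2$2*M$3$3 - M$1$2*M$2$1 - M$1$3*M$3$1 - M$2$3*M$3$2"
  define r where "r = - det M"
  obtain a where a: "a^3 + p*a^2 + q*a + r = 0" using cubic_root by blast
  have "det (M - a *\<^sub>R mat 1) = -(a^3 + p*a^2 + q*a + r)"
    unfolding p_def q_def r_def by (simp add: det_3 mat_def power3_eq_cube power2_eq_square algebra_simps)
  then have "det (M - a *\<^sub>R mat 1) = 0" using a by simp
  then have "\<not> invertible (M - a *\<^sub>R mat 1)" using invertible_det_nz by blast
  then have "\<not> (\<exists>B::real^3^3. B ** (M - a *\<^sub>R mat 1) = mat 1)" using invertible_left_inverse by blast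
  then have "\<not> (\<forall>x. (M - a *\<^sub>R mat 1) *v x = 0 \<longrightarrow> x = 0)"
    using matrix_left_invertible_ker by blast
  then obtain x where x: "x \<noteq> 0" "(M - a *\<^sub>R mat 1) *v x = 0" by blast
  moreover have "(a *\<^sub>R mat 1) *v x = a *\<^sub>R x"
    by (simp add: vec_eq_iff matrix_vector_mult_def mat_def sum_3 forall_3)
  ultimately have "M *v x = a *\<^sub>R x"
    by (simp add: matrix_vector_mult_diff_rdistrib)
  with x show ?thesis by blast
qed



lemma span3_coeffs:
  fixes a b c :: "'b::real_vector"
  assumes "x \<in> span {a,b,c}"
  shows "\<exists>p q r. x = p *\<^sub>R a + q *\<^sub>R b + r *\<^sub>R c"
proof -
  from assms obtain k1 where "x - k1 *\<^sub>R a \<in> span {b,c}" by (auto simp: span_insert)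
  then obtain k2 where "x - k1 *\<^sub>R a - k2 *\<^sub>R b \<in> span {c}" by (auto simp: span_insert)
  then obtain k3 where "x - k1 *\<^sub>R a - k2 *\<^sub>R b = k3 *\<^sub>R c" by (auto simp: span_singleton)
  then have "x = k1 *\<^sub>R a + k2 *\<^sub>R b + k3 *\<^sub>R c" by (simp add: algebra_simps)
  then show ?thesis by blast
qed

lemma in_span3I:
  fixes a b c :: "'b::real_vector"
  assumes "x = p *\<^sub>R a + q *\<^sub>R b + r *\<^sub>R c"
  shows "x \<in> span {a,b,c}"
  unfolding assms by (intro span_add span_scale span_base) auto

lemma eig_span3:
  fixes f :: "'b::real_vector \<Rightarrow> 'b"
  assumes lf: "linear f"
    and f1: "f b1 \<in> span {b1,b2,b3}" and f2: "f b2 \<in> span {b1,b2,b3}" and f3: "f b3 \<in> span {b1,b2,b3}"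
  shows "\<exists>a x1 x2 x3. (x1 \<noteq> 0 \<or> x2 \<noteq> 0 \<or> x3 \<noteq> 0) \<and>
     f (x1 *\<^sub>R b1 + x2 *\<^sub>R b2 + x3 *\<^sub>R b3) = a *\<^sub>R (x1 *\<^sub>R b1 + x2 *\<^sub>R b2 + x3 *\<^sub>R b3)"
proof -
  obtain m11 m21 m31 where e1: "f b1 = m11 *\<^sub>R b1 + m21 *\<^sub>R b2 + m31 *\<^sub>R b3" using span3_coeffs[OF f1] by blast
  obtain m12 m22 m32 where e2: "f b2 = m12 *\<^sub>R b1 + m22 *\<^sub>R b2 + m32 *\<^sub>R b3" using span3_coeffs[OF f2] by blast
  obtain m13 m23 m33 where e3: "f b3 = m13 *\<^sub>R b1 + m23 *\<^sub>R b2 + m33 *\<^sub>R b3" using span3_coeffs[OF f3] by blast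
  define M :: "real^3^3" where "M = vector [vector [m11,m12,m13], vector [m21,m22,m23], vector [m31,m32,m33]]"
  obtain a x where x: "x \<noteq> 0" "M *v x = a *\<^sub>R x" using eig3 by blast
  have c1: "m11 * x$1 + m12 * x$2 + m13 * x$3 = a * x$1"
    using arg_cong[OF x(2), of "\<lambda>v. v$1"] by (simp add: M_def matrix_vector_mult_def sum_3)
  have c2: "m21 * x$1 + m22 * x$2 + m23 * x$3 = a * x$2"
    using arg_cong[OF x(2), of "\<lambda>v. v$2"] by (simp add: M_def matrix_vector_mult_def sum_3)
  have c3: "m31 * x$1 + m32 * x$2 + m33 * x$3 = a * x$3"
    using arg_cong[OF x(2), of "\<lambda>v. v$3"] by (simp add: M_def matrix_vector_mult_def sum_3)
  have nz: "x$1 \<noteq> 0 \<or> x$2 \<noteq> 0 \<or> x$3 \<noteq> 0" using x(1) by (auto simp: vec_eq_iff forall_3)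
  have "f (x$1 *\<^sub>R b1 + x$2 *\<^sub>R b2 + x$3 *\<^sub>R b3) =
     (m11 * x$1 + m12 * x$2 + m13 * x$3) *\<^sub>R b1 + (m21 * x$1 + m22 * x$2 + m23 * x$3) *\<^sub>R b2
     + (m31 * x$1 + m32 * x$2 + m33 * x$3) *\<^sub>R b3"
    by (simp add: linear_add[OF lf] linear_scale[OF lf] e1 e2 e3 algebra_simps)
  also have "\<dots> = (a * x$1) *\<^sub>R b1 + (a * x$2) *\<^sub>R b2 + (a * x$3) *\<^sub>R b3"
    by (simp only: c1 c2 c3)
  also have "\<dots> = a *\<^sub>R (x$1 *\<^sub>R b1 + x$2 *\<^sub>R b2 + x$3 *\<^sub>R b3)"
    by (simp add: algebra_simps)
  finally show ?thesis using nz by blast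
qed



definition NF :: "('b::real_vector \<Rightarrow> 'b) \<Rightarrow> 'b set \<Rightarrow> real \<Rightarrow> 'b \<Rightarrow> 'b \<Rightarrow> 'b \<Rightarrow> (nat \<Rightarrow> nat \<Rightarrow> real) \<Rightarrow> bool" where
  "NF f S c u2 u3 u4 A \<longleftrightarrow> c \<noteq> 0 \<and> S = span {u2,u3,u4} \<and>
     c *\<^sub>R f u2 = A 2 2 *\<^sub>R u2 + A 2 3 *\<^sub>R u3 + A 2 4 *\<^sub>R u4 \<and>
     c *\<^sub>R f u3 = A 3 2 *\<^sub>R u2 + A 3 3 *\<^sub>R u3 + A 3 4 *\<^sub>R u4 \<and>
     c *\<^sub>R f u4 = A 4 2 *\<^sub>R u2 + A 4 3 *\<^sub>R u3 + A 4 4 *\<^sub>R u4"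

definition Good :: "('b::real_vector \<Rightarrow> 'b) \<Rightarrow> 'b set \<Rightarrow> bool" where
  "Good f S \<longleftrightarrow> (\<exists>c u2 u3 u4.
         NF f S c u2 u3 u4 h3R \<or>
         NF f S c u2 u3 u4 n4 \<or>
         (\<exists>l. NF f S c u2 u3 u4 (r3R l)) \<or>
         (\<exists>m l. m * l \<noteq> 0 \<and> NF f S c u2 u3 u4 (r4ml m l)) \<or>
         NF f S c u2 u3 u4 r3R' \<or>
         (\<exists>l. NF f S c u2 u3 u4 (r4l l)) \<or>
         NF f S c u2 u3 u4 r4 \<or>
         (\<exists>l. NF f S c u2 u3 u4 (r3primeR l)) \<or>
         (\<exists>m l. m \<noteq> 0 \<and> l \<noteq> 0 \<and> NF f S c u2 u3 u4 (r4prime m l)))"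

definition Bad :: "('b::real_vector \<Rightarrow> 'b) \<Rightarrow> 'b set \<Rightarrow> bool" where
  "Bad f S \<longleftrightarrow> (\<exists>c u2 u3 u4 m. m \<noteq> 0 \<and> NF f S c u2 u3 u4 (r4prime m 0))"

definition Zero :: "('b::real_vector \<Rightarrow> 'b) \<Rightarrow> 'b set \<Rightarrow> bool" where
  "Zero f S \<longleftrightarrow> (\<forall>x\<in>S. f x = 0)"

lemmas tbl_defs = adm_def h3R_def n4_def r3R_def r4ml_def r3R'_def r4l_def r4_def r3primeR_def r4prime_def

lemma span3_perm: "span {a,b,c} = span {b,a,c}" "span {a,b,c} = span {a,c,b}" "span {a,b,c} = span {c,a,b}"
  by (simp_all add: insert_commute)

lemma span3_eqI:
  fixes a b c :: "'b::real_vector"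
  assumes "x \<in> span {a,b,c}" "y \<in> span {a,b,c}" "z \<in> span {a,b,c}"
    "a \<in> span {x,y,z}" "b \<in> span {x,y,z}" "c \<in> span {x,y,z}"
  shows "span {x,y,z} = span {a,b,c}"
  using assms by (auto simp: span_eq)

lemma span3_scale:
  fixes a b c :: "'b::real_vector"
  assumes "k1 \<noteq> 0" "k2 \<noteq> 0" "k3 \<noteq> 0"
  shows "span {k1 *\<^sub>R a, k2 *\<^sub>R b, k3 *\<^sub>R c} = span {a,b,c}"
proof (rule span3_eqI)
  show "a \<in> span {k1 *\<^sub>R a, k2 *\<^sub>R b, k3 *\<^sub>R c}" by (rule in_span3I[of _ "1/k1" _ 0 _ 0]) (use assms in simp)
  show "b \<in> span {k1 *\<^sub>R a, k2 *\<^sub>R b, k3 *\<^sub>R c}" by (rule in_span3I[of _ 0 _ "1/k2" _ 0]) (use assms in simp)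
  show "c \<in> span {k1 *\<^sub>R a, k2 *\<^sub>R b, k3 *\<^sub>R c}" by (rule in_span3I[of _ 0 _ 0 _ "1/k3"]) (use assms in simp)
  show "k1 *\<^sub>R a \<in> span {a,b,c}" by (rule in_span3I[of _ k1 _ 0 _ 0]) simp
  show "k2 *\<^sub>R b \<in> span {a,b,c}" by (rule in_span3I[of _ 0 _ k2 _ 0]) simp
  show "k3 *\<^sub>R c \<in> span {a,b,c}" by (rule in_span3I[of _ 0 _ 0 _ k3]) simp
qed

lemma D_nz:
  fixes f :: "'b::real_vector \<Rightarrow> 'b"
  assumes "f u1 = l1 *\<^sub>R u1" "f u2 = l2 *\<^sub>R u2" "f u3 = l3 *\<^sub>R u3" "S = span {u1,u2,u3}" "l1 \<noteq> 0"
  shows "Good f S"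
proof (cases "l2 = 0")
  case True
  show ?thesis
  proof (cases "l3 = 0")
    case True
    have "NF f S (1/l1) u1 u2 u3 (r3R 0)"
      unfolding NF_def using assms(5) \<open>l2 = 0\<close> True by (simp add: assms(1-4) tbl_defs)
    then show ?thesis unfolding Good_def by blast
  next
    case False
    have sp: "S = span {u1,u3,u2}" using assms(4) by (simp add: insert_commute)
    have "NF f S (1/l1) u1 u3 u2 (r3R (l3/l1))"
      unfolding NF_def using assms(5) \<open>l2 = 0\<close> False by (simp add: sp tbl_defs assms(1-3))
    then show ?thesis unfolding Good_def by blast
  qed
next
  case False
  show ?thesis
  proof (cases "l3 = 0")
    case True
    have "NF f S (1/l1) u1 u2 u3 (r3R (l2/l1))"
      unfolding NF_def using assms(5) False True by (simp add: assms(1-4) tbl_defs)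
    then show ?thesis unfolding Good_def by blast
  next
    case F3: False
    have "NF f S (1/l1) u1 u2 u3 (r4ml (l2/l1) (l3/l1))"
      unfolding NF_def using assms(5) False F3 by (simp add: assms(1-4) tbl_defs)
    moreover have "(l2/l1) * (l3/l1) \<noteq> 0" using assms False F3 by simp
    ultimately show ?thesis unfolding Good_def by blast
  qed
qed

lemma D_case:
  fixes f :: "'b::real_vector \<Rightarrow> 'b"
  assumes lf: "linear f" and "f u1 = l1 *\<^sub>R u1" "f u2 = l2 *\<^sub>R u2" "f u3 = l3 *\<^sub>R u3" "S = span {u1,u2,u3}"
  shows "Zero f S \<or> Good f S"
proof -
  consider "l1 \<noteq> 0" | "l2 \<noteq> 0" | "l3 \<noteq> 0" | "l1 = 0 \<and> l2 = 0 \<and> l3 = 0" by blast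
  then show ?thesis
  proof cases
    case 1 then show ?thesis using D_nz[of f u1 l1 u2 l2 u3 l3 S] assms by blast
  next
    case 2
    have "S = span {u2,u1,u3}" using assms(5) by (simp add: insert_commute)
    then show ?thesis using D_nz[of f u2 l2 u1 l1 u3 l3 S] assms(2-4) 2 by blast
  next
    case 3
    have "S = span {u3,u1,u2}" using assms(5) by (simp add: insert_commute)
    then show ?thesis using D_nz[of f u3 l3 u1 l1 u2 l2 S] assms(2-4) 3 by blast
  next
    case 4
    have "Zero f S" unfolding Zero_def
    proof
      fix x assume "x \<in> S"
      then obtain p q r where "x = p *\<^sub>R u1 + q *\<^sub>R u2 + r *\<^sub>R u3" using span3_coeffs assms by blast
      then show "f x = 0" using 4 by (simp add: linear_add[OF lf] linear_scale[OF lf] assms(2-4))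
    qed
    then show ?thesis by blast
  qed
qed




lemma J21_case:
  fixes f :: "'b::real_vector \<Rightarrow> 'b"
  assumes lf: "linear f" and "f y = l *\<^sub>R y" "f z = l *\<^sub>R z + y" "f x = k *\<^sub>R x" "S = span {y,z,x}"
  shows "Good f S"
proof -
  consider "k \<noteq> 0" | "k = 0" "l \<noteq> 0" | "k = 0" "l = 0" by blast
  then show ?thesis
  proof cases
    case 1
    have "S = span {x, (1/k) *\<^sub>R y, z}"
      using assms(5) span3_scale[of 1 "1/k" 1 x y z] 1 by (simp add: insert_commute)
    moreover have "(1/k) *\<^sub>R f x = 1 *\<^sub>R x + 0 *\<^sub>R ((1/k) *\<^sub>R y) + 0 *\<^sub>R z"
      using 1 by (simp add: assms(4))
    moreover have "(1/k) *\<^sub>R f ((1/k) *\<^sub>R y) = 0 *\<^sub>R x + (l/k) *\<^sub>R ((1/k) *\<^sub>R y) + 0 *\<^sub>R z"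
      by (simp add: assms(2) linear_scale[OF lf])
    moreover have "(1/k) *\<^sub>R f z = 0 *\<^sub>R x + 1 *\<^sub>R ((1/k) *\<^sub>R y) + (l/k) *\<^sub>R z"
      by (simp add: assms(3) scaleR_add_right)
    ultimately have "NF f S (1/k) x ((1/k) *\<^sub>R y) z (r4l (l/k))"
      using 1 unfolding NF_def by (simp add: tbl_defs)
    then show ?thesis unfolding Good_def by blast
  next
    case 2
    have "S = span {(1/l) *\<^sub>R y, z, x}"
      using assms(5) span3_scale[of "1/l" 1 1 y z x] 2 by simp
    moreover have "(1/l) *\<^sub>R f ((1/l) *\<^sub>R y) = 1 *\<^sub>R ((1/l) *\<^sub>R y) + 0 *\<^sub>R z + 0 *\<^sub>R x"
      using 2 by (simp add: assms(2) linear_scale[OF lf])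
    moreover have "(1/l) *\<^sub>R f z = 1 *\<^sub>R ((1/l) *\<^sub>R y) + 1 *\<^sub>R z + 0 *\<^sub>R x"
      using 2 by (simp add: assms(3) scaleR_add_right)
    moreover have "(1/l) *\<^sub>R f x = 0 *\<^sub>R ((1/l) *\<^sub>R y) + 0 *\<^sub>R z + 0 *\<^sub>R x"
      using 2 by (simp add: assms(4))
    ultimately have "NF f S (1/l) ((1/l) *\<^sub>R y) z x r3R'"
      using 2 unfolding NF_def by (simp add: tbl_defs)
    then show ?thesis unfolding Good_def by blast
  next
    case 3
    have "S = span {z,y,x}" using assms(5) by (simp add: insert_commute)
    then have "NF f S 1 z y x h3R"
      using 3 unfolding NF_def by (simp add: tbl_defs assms(2-4))
    then show ?thesis unfolding Good_def by blast
  qed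
qed



lemma J3_case:
  fixes f :: "'b::real_vector \<Rightarrow> 'b"
  assumes lf: "linear f" and "f x1 = l *\<^sub>R x1" "f x2 = l *\<^sub>R x2 + x1" "f x3 = l *\<^sub>R x3 + x2" "S = span {x1,x2,x3}"
  shows "Good f S"
proof (cases "l = 0")
  case False
  have "S = span {(1/(l*l)) *\<^sub>R x1, (1/l) *\<^sub>R x2, x3}"
    using assms(5) span3_scale[of "1/(l*l)" "1/l" 1 x1 x2 x3] False by simp
  moreover have "(1/l) *\<^sub>R f ((1/(l*l)) *\<^sub>R x1) = 1 *\<^sub>R ((1/(l*l)) *\<^sub>R x1) + 0 *\<^sub>R ((1/l) *\<^sub>R x2) + 0 *\<^sub>R x3"
    using False by (simp add: assms(2) linear_scale[OF lf])
  moreover have "(1/l) *\<^sub>R f ((1/l) *\<^sub>R x2) = 1 *\<^sub>R ((1/(l*l)) *\<^sub>R x1) + 1 *\<^sub>R ((1/l) *\<^sub>R x2) + 0 *\<^sub>R x3"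
    using False by (simp add: assms(3) linear_scale[OF lf] scaleR_add_right)
  moreover have "(1/l) *\<^sub>R f x3 = 0 *\<^sub>R ((1/(l*l)) *\<^sub>R x1) + 1 *\<^sub>R ((1/l) *\<^sub>R x2) + 1 *\<^sub>R x3"
    using False by (simp add: assms(4) scaleR_add_right add.commute)
  ultimately have "NF f S (1/l) ((1/(l*l)) *\<^sub>R x1) ((1/l) *\<^sub>R x2) x3 r4"
    using False unfolding NF_def by (simp add: tbl_defs)
  then show ?thesis unfolding Good_def by blast
next
  case True
  have "S = span {x3,x2,x1}" using assms(5) by (simp add: insert_commute)
  then have "NF f S 1 x3 x2 x1 n4"
    using True unfolding NF_def by (simp add: tbl_defs assms(2-4))
  then show ?thesis unfolding Good_def by blast
qed




lemma Good_I1: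
  assumes "NF f S c u2 u3 u4 h3R"
  shows "Good f S"
  unfolding Good_def
  apply (rule exI[of _ c], rule exI[of _ u2], rule exI[of _ u3], rule exI[of _ u4])
  apply (rule disjI1)
  using assms by simp

lemma Good_I2:
  assumes "NF f S c u2 u3 u4 n4"
  shows "Good f S"
  unfolding Good_def
  apply (rule exI[of _ c], rule exI[of _ u2], rule exI[of _ u3], rule exI[of _ u4])
  apply (rule disjI2)
  apply (rule disjI1)
  using assms by simp

lemma Good_I3:
  assumes "NF f S c u2 u3 u4 (r3R l)"
  shows "Good f S"
  unfolding Good_def
  apply (rule exI[of _ c], rule exI[of _ u2], rule exI[of _ u3], rule exI[of _ u4])
  apply (rule disjI2)
  apply (rule disjI2)
  apply (rule disjI1)
  apply (rule exI[of _ l])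
  using assms by simp

lemma Good_I4:
  assumes "m * l \<noteq> 0" "NF f S c u2 u3 u4 (r4ml m l)"
  shows "Good f S"
  unfolding Good_def
  apply (rule exI[of _ c], rule exI[of _ u2], rule exI[of _ u3], rule exI[of _ u4])
  apply (rule disjI2)
  apply (rule disjI2)
  apply (rule disjI2)
  apply (rule disjI1)
  apply (rule exI[of _ m], rule exI[of _ l])
  using assms by simp

lemma Good_I5:
  assumes "NF f S c u2 u3 u4 r3R'"
  shows "Good f S"
  unfolding Good_def
  apply (rule exI[of _ c], rule exI[of _ u2], rule exI[of _ u3], rule exI[of _ u4])
  apply (rule disjI2)
  apply (rule disjI2)
  apply (rule disjI2)
  apply (rule disjI2)
  apply (rule disjI1)
  using assms by simp

lemma Good_I6:
  assumes "NF f S c u2 u3 u4 (r4l l)"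
  shows "Good f S"
  unfolding Good_def
  apply (rule exI[of _ c], rule exI[of _ u2], rule exI[of _ u3], rule exI[of _ u4])
  apply (rule disjI2)
  apply (rule disjI2)
  apply (rule disjI2)
  apply (rule disjI2)
  apply (rule disjI2)
  apply (rule disjI1)
  apply (rule exI[of _ l])
  using assms by simp

lemma Good_I7:
  assumes "NF f S c u2 u3 u4 r4"
  shows "Good f S"
  unfolding Good_def
  apply (rule exI[of _ c], rule exI[of _ u2], rule exI[of _ u3], rule exI[of _ u4])
  apply (rule disjI2)
  apply (rule disjI2)
  apply (rule disjI2)
  apply (rule disjI2)
  apply (rule disjI2)
  apply (rule disjI2)
  apply (rule disjI1)
  using assms by simp

lemma Good_I8:
  assumes "NF f S c u2 u3 u4 (r3primeR l)"
  shows "Good f S"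
  unfolding Good_def
  apply (rule exI[of _ c], rule exI[of _ u2], rule exI[of _ u3], rule exI[of _ u4])
  apply (rule disjI2)
  apply (rule disjI2)
  apply (rule disjI2)
  apply (rule disjI2)
  apply (rule disjI2)
  apply (rule disjI2)
  apply (rule disjI2)
  apply (rule disjI1)
  apply (rule exI[of _ l])
  using assms by simp

lemma Good_I9:
  assumes "m \<noteq> 0" "l \<noteq> 0" "NF f S c u2 u3 u4 (r4prime m l)"
  shows "Good f S"
  unfolding Good_def
  apply (rule exI[of _ c], rule exI[of _ u2], rule exI[of _ u3], rule exI[of _ u4])
  apply (rule disjI2)
  apply (rule disjI2)
  apply (rule disjI2)
  apply (rule disjI2)
  apply (rule disjI2)
  apply (rule disjI2)
  apply (rule disjI2)
  apply (rule disjI2)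
  apply (rule exI[of _ m], rule exI[of _ l])
  using assms by simp

lemma Bad_I: assumes "m \<noteq> 0" "NF f S c u2 u3 u4 (r4prime m 0)" shows "Bad f S"
  unfolding Bad_def using assms by blast



lemma NF_I:
  assumes "c \<noteq> 0" "S = span {u2,u3,u4}"
    "c *\<^sub>R f u2 = A 2 2 *\<^sub>R u2 + A 2 3 *\<^sub>R u3 + A 2 4 *\<^sub>R u4"
    "c *\<^sub>R f u3 = A 3 2 *\<^sub>R u2 + A 3 3 *\<^sub>R u3 + A 3 4 *\<^sub>R u4"
    "c *\<^sub>R f u4 = A 4 2 *\<^sub>R u2 + A 4 3 *\<^sub>R u3 + A 4 4 *\<^sub>R u4"
  shows "NF f S c u2 u3 u4 A"
  using assms unfolding NF_def by blast

lemma rot_case: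
  fixes f :: "'b::real_vector \<Rightarrow> 'b"
  assumes lf: "linear f" and "f v = a *\<^sub>R v" "f u1 = l *\<^sub>R u1 - b *\<^sub>R u2" "f u2 = b *\<^sub>R u1 + l *\<^sub>R u2" "S = span {v,u1,u2}" "b \<noteq> 0"
  shows "Good f S \<or> Bad f S"
proof (cases "a = 0")
  case True
  let ?A = "r3primeR (l/b)"
  have "NF f S (1/b) u1 u2 v ?A"
  proof (rule NF_I)
    show "S = span {u1,u2,v}" using assms(5) by (simp add: insert_commute)
    show "(1/b) *\<^sub>R f u1 = ?A 2 2 *\<^sub>R u1 + ?A 2 3 *\<^sub>R u2 + ?A 2 4 *\<^sub>R v"
      using assms(6) by (simp add: tbl_defs assms(3) scaleR_diff_right)
    show "(1/b) *\<^sub>R f u2 = ?A 3 2 *\<^sub>R u1 + ?A 3 3 *\<^sub>R u2 + ?A 3 4 *\<^sub>R v"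
      using assms(6) by (simp add: tbl_defs assms(4) scaleR_add_right)
    show "(1/b) *\<^sub>R f v = ?A 4 2 *\<^sub>R u1 + ?A 4 3 *\<^sub>R u2 + ?A 4 4 *\<^sub>R v"
      using True by (simp add: tbl_defs assms(2))
  qed (use assms(6) in simp)
  then show ?thesis using Good_I8 by blast
next
  case False
  let ?A = "r4prime (a/b) (l/b)"
  have nf: "NF f S (1/b) v u1 u2 ?A"
  proof (rule NF_I)
    show "(1/b) *\<^sub>R f v = ?A 2 2 *\<^sub>R v + ?A 2 3 *\<^sub>R u1 + ?A 2 4 *\<^sub>R u2"
      by (simp add: tbl_defs assms(2))
    show "(1/b) *\<^sub>R f u1 = ?A 3 2 *\<^sub>R v + ?A 3 3 *\<^sub>R u1 + ?A 3 4 *\<^sub>R u2"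
      using assms(6) by (simp add: tbl_defs assms(3) scaleR_diff_right)
    show "(1/b) *\<^sub>R f u2 = ?A 4 2 *\<^sub>R v + ?A 4 3 *\<^sub>R u1 + ?A 4 4 *\<^sub>R u2"
      using assms(6) by (simp add: tbl_defs assms(4) scaleR_add_right)
  qed (use assms(5,6) in simp_all)
  have ab: "a/b \<noteq> 0" using False assms(6) by simp
  show ?thesis
  proof (cases "l = 0")
    case True
    then have "NF f S (1/b) v u1 u2 (r4prime (a/b) 0)" using nf by simp
    then show ?thesis using Bad_I ab by blast
  next
    case F2: False
    then have "l/b \<noteq> 0" using assms(6) by simp
    then show ?thesis using nf ab Good_I9 by blast
  qed
qed



lemma lin3_apply:
  fixes f :: "'b::real_vector \<Rightarrow> 'b"
  assumes lf: "linear f"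
    and "f a = m11 *\<^sub>R a + m21 *\<^sub>R b + m31 *\<^sub>R c"
    and "f b = m12 *\<^sub>R a + m22 *\<^sub>R b + m32 *\<^sub>R c"
    and "f c = m13 *\<^sub>R a + m23 *\<^sub>R b + m33 *\<^sub>R c"
  shows "f (p1 *\<^sub>R a + p2 *\<^sub>R b + p3 *\<^sub>R c) =
     (m11*p1 + m12*p2 + m13*p3) *\<^sub>R a + (m21*p1 + m22*p2 + m23*p3) *\<^sub>R b + (m31*p1 + m32*p2 + m33*p3) *\<^sub>R c"
  by (simp add: linear_add[OF lf] linear_scale[OF lf] assms(2-4) algebra_simps)

lemma eq3:
  fixes a b c :: "'b::real_vector"
  shows "p1 = q1 \<Longrightarrow> p2 = q2 \<Longrightarrow> p3 = q3 \<Longrightarrow> p1 *\<^sub>R a + p2 *\<^sub>R b + p3 *\<^sub>R c = q1 *\<^sub>R a + q2 *\<^sub>R b + q3 *\<^sub>R c"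
  by simp

lemma scale3:
  fixes a b c :: "'b::real_vector"
  shows "k *\<^sub>R (p1 *\<^sub>R a + p2 *\<^sub>R b + p3 *\<^sub>R c) = (k*p1) *\<^sub>R a + (k*p2) *\<^sub>R b + (k*p3) *\<^sub>R c"
  by (simp add: algebra_simps)

lemma add3:
  fixes a b c :: "'b::real_vector"
  shows "(p1 *\<^sub>R a + p2 *\<^sub>R b + p3 *\<^sub>R c) + (q1 *\<^sub>R a + q2 *\<^sub>R b + q3 *\<^sub>R c) = (p1+q1) *\<^sub>R a + (p2+q2) *\<^sub>R b + (p3+q3) *\<^sub>R c"
  by (simp add: algebra_simps)

lemma span_tri:
  fixes a b c :: "'b::real_vector"
  assumes k: "k1 \<noteq> 0" "k2 \<noteq> 0" "k3 \<noteq> 0"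
  shows "span {k1 *\<^sub>R a + 0 *\<^sub>R b + 0 *\<^sub>R c, p *\<^sub>R a + k2 *\<^sub>R b + 0 *\<^sub>R c, q *\<^sub>R a + r *\<^sub>R b + k3 *\<^sub>R c} = span {a,b,c}"
    (is "span {?A, ?B, ?C} = _")
proof (rule span3_eqI)
  let ?T = "span {?A, ?B, ?C}"
  have A: "?A \<in> ?T" "?B \<in> ?T" "?C \<in> ?T" by (auto intro: span_base)
  have ha: "a \<in> ?T"
  proof -
    have "a = (1/k1) *\<^sub>R ?A" using k by simp
    then show ?thesis using A span_scale by metis
  qed
  have hb: "b \<in> ?T"
  proof -
    have "b = (1/k2) *\<^sub>R (?B - p *\<^sub>R a)" using k by (simp add: algebra_simps)
    then show ?thesis using A ha span_scale span_diff by metis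
  qed
  have hc: "c \<in> ?T"
  proof -
    have "c = (1/k3) *\<^sub>R (?C - q *\<^sub>R a - r *\<^sub>R b)" using k by (simp add: algebra_simps)
    then show ?thesis using A ha hb span_scale span_diff by metis
  qed
  show "a \<in> ?T" "b \<in> ?T" "c \<in> ?T" by fact+
qed (rule in_span3I, rule refl)+




lemma tri_case:
  fixes f :: "'b::real_vector \<Rightarrow> 'b"
  assumes lf: "linear f" and fv: "f v = a *\<^sub>R v" and fy: "f y = b *\<^sub>R y + g *\<^sub>R v"
    and fz: "f z = c *\<^sub>R z + d *\<^sub>R y + e *\<^sub>R v" and S: "S = span {v,y,z}"
  shows "Zero f S \<or> Good f S"
proof -
  have F: "\<And>p1 p2 p3. f (p1 *\<^sub>R v + p2 *\<^sub>R y + p3 *\<^sub>R z) =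
      (a*p1 + g*p2 + e*p3) *\<^sub>R v + (0*p1 + b*p2 + d*p3) *\<^sub>R y + (0*p1 + 0*p2 + c*p3) *\<^sub>R z"
    by (rule lin3_apply[OF lf]) (simp_all add: fv fy fz algebra_simps)
  have fgv: "\<And>k. f (k *\<^sub>R v) = a *\<^sub>R (k *\<^sub>R v)" by (simp add: linear_scale[OF lf] fv)
  show ?thesis
  proof (cases "b = a")
    case False
    then have ba: "b - a \<noteq> 0" by simp
    define t where "t = g/(b-a)"
    define y' where "y' = t *\<^sub>R v + 1 *\<^sub>R y + 0 *\<^sub>R z"
    have fy': "f y' = b *\<^sub>R y'"
      unfolding y'_def F scale3 by (rule eq3) (use ba in \<open>simp_all add: t_def field_simps\<close>)
    consider "c \<noteq> a" "c \<noteq> b" | "c = a" | "c = b" by blast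
    then show ?thesis
    proof cases
      case 1
      then have ca: "c - a \<noteq> 0" and cb: "c - b \<noteq> 0" by auto
      define s where "s = d/(c-b)"
      define r where "r = (g * s + e)/(c-a)"
      define z' where "z' = r *\<^sub>R v + s *\<^sub>R y + 1 *\<^sub>R z"
      have rr: "r * (c - a) = g * s + e" using ca by (simp add: r_def)
      have ss: "s * (c - b) = d" using cb by (simp add: s_def)
      have fz': "f z' = c *\<^sub>R z'"
        unfolding z'_def F scale3 by (rule eq3) (use rr ss in algebra, use rr ss in algebra, simp)
      have sp: "S = span {v, y', z'}"
        using span_tri[of 1 1 1 v y z t r s] unfolding S y'_def z'_def by simp
      show ?thesis using D_case[OF lf fv fy' fz' sp] .
    next
      case 2
      then have ab: "a - b \<noteq> 0" using ba by simp
      define s where "s = d/(a-b)"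
      define E where "E = g * s + e"
      define z' where "z' = 0 *\<^sub>R v + s *\<^sub>R y + 1 *\<^sub>R z"
      have "f z' = (a*0 + E) *\<^sub>R v + (a * s) *\<^sub>R y + (a*1) *\<^sub>R z"
        unfolding z'_def F by (rule eq3) (use ab 2 in \<open>simp_all add: E_def s_def field_simps\<close>)
      also have "\<dots> = a *\<^sub>R z' + E *\<^sub>R v" unfolding z'_def by (simp add: algebra_simps)
      finally have fz': "f z' = a *\<^sub>R z' + E *\<^sub>R v" .
      have sp: "S = span {v, y', z'}"
        using span_tri[of 1 1 1 v y z t 0 s] unfolding S y'_def z'_def by simp
      show ?thesis
      proof (cases "E = 0")
        case True
        then have "f z' = a *\<^sub>R z'" using fz' by simp
        then show ?thesis using D_case[OF lf fv fy' _ sp] by blast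
      next
        case False
        have "S = span {E *\<^sub>R v, z', y'}"
          using sp span3_scale[of E 1 1 v y' z'] False by (simp add: insert_commute)
        then show ?thesis using J21_case[OF lf fgv[of E] fz' fy'] by blast
      qed
    next
      case 3
      define r where "r = (e - d*t)/(b-a)"
      define z' where "z' = r *\<^sub>R v + 0 *\<^sub>R y + 1 *\<^sub>R z"
      have "f z' = (b*r + d*t) *\<^sub>R v + (b*0 + d*1) *\<^sub>R y + (b*1 + d*0) *\<^sub>R z"
        unfolding z'_def F by (rule eq3) (use ba 3 in \<open>simp_all add: r_def field_simps\<close>)
      also have "\<dots> = b *\<^sub>R z' + d *\<^sub>R y'" unfolding z'_def y'_def by (simp add: algebra_simps)
      finally have fz': "f z' = b *\<^sub>R z' + d *\<^sub>R y'" .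
      have sp: "S = span {v, y', z'}"
        using span_tri[of 1 1 1 v y z t r 0] unfolding S y'_def z'_def by simp
      show ?thesis
      proof (cases "d = 0")
        case True
        then have "f z' = b *\<^sub>R z'" using fz' by simp
        then show ?thesis using D_case[OF lf fv fy' _ sp] by blast
      next
        case False
        have fdy: "f (d *\<^sub>R y') = b *\<^sub>R (d *\<^sub>R y')" using fy' by (simp add: linear_scale[OF lf])
        have "S = span {d *\<^sub>R y', z', v}"
          using sp span3_scale[of 1 d 1 v y' z'] False by (simp add: insert_commute)
        then show ?thesis using J21_case[OF lf fdy fz' fv] by blast
      qed
    qed
  next
    case True
    note ba = True
    show ?thesis
    proof (cases "c = a")
      case False
      then have ca: "c - a \<noteq> 0" by simp
      define s where "s = d/(c-a)"
      define r where "r = (g * s + e)/(c-a)"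
      define z' where "z' = r *\<^sub>R v + s *\<^sub>R y + 1 *\<^sub>R z"
      have rr: "r * (c - a) = g * s + e" using ca by (simp add: r_def)
      have ss: "s * (c - a) = d" using ca by (simp add: s_def)
      have fz': "f z' = c *\<^sub>R z'"
        unfolding z'_def F scale3 by (rule eq3) (use rr ss ba in algebra, use rr ss ba in algebra, simp)
      have sp: "S = span {v, y, z'}"
        using span_tri[of 1 1 1 v y z 0 r s] unfolding S z'_def by simp
      show ?thesis
      proof (cases "g = 0")
        case True
        then have "f y = a *\<^sub>R y" using fy ba by simp
        then show ?thesis using D_case[OF lf fv _ fz' sp] by blast
      next
        case False
        have fy2: "f y = a *\<^sub>R y + g *\<^sub>R v" using fy ba by simp
        have "S = span {g *\<^sub>R v, y, z'}"
          using sp span3_scale[of g 1 1 v y z'] False by simp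
        then show ?thesis using J21_case[OF lf fgv[of g] fy2 fz'] by blast
      qed
    next
      case True
      note ca = True
      consider "g \<noteq> 0" "d \<noteq> 0" | "d = 0" "g \<noteq> 0" | "d = 0" "g = 0" "e \<noteq> 0" | "d = 0" "g = 0" "e = 0"
        | "g = 0" "d \<noteq> 0" by blast
      then show ?thesis
      proof cases
        case 1
        define x1 where "x1 = (d*g) *\<^sub>R v + 0 *\<^sub>R y + 0 *\<^sub>R z"
        define x2 where "x2 = e *\<^sub>R v + d *\<^sub>R y + 0 *\<^sub>R z"
        define x3 where "x3 = 0 *\<^sub>R v + 0 *\<^sub>R y + 1 *\<^sub>R z"
        have f1: "f x1 = a *\<^sub>R x1" unfolding x1_def F scale3 by (rule eq3) simp_all
        have "f x2 = (a*e + d*g) *\<^sub>R v + (a*d) *\<^sub>R y + (a*0 + 0) *\<^sub>R z"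
          unfolding x2_def F by (rule eq3) (use ba in \<open>simp_all add: algebra_simps\<close>)
        also have "\<dots> = a *\<^sub>R x2 + x1" unfolding x1_def x2_def by (simp add: algebra_simps)
        finally have f2: "f x2 = a *\<^sub>R x2 + x1" .
        have "f x3 = (e) *\<^sub>R v + (d) *\<^sub>R y + (a) *\<^sub>R z"
          unfolding x3_def F by (rule eq3) (use ca in simp_all)
        also have "\<dots> = a *\<^sub>R x3 + x2" unfolding x3_def x2_def by (simp add: algebra_simps)
        finally have f3: "f x3 = a *\<^sub>R x3 + x2" .
        have sp: "S = span {x1, x2, x3}"
          using span_tri[of "d*g" d 1 v y z e 0 0] 1 unfolding S x1_def x2_def x3_def by simp
        show ?thesis using J3_case[OF lf f1 f2 f3 sp] by blast
      next
        case 2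
        define z' where "z' = 0 *\<^sub>R v + (-e/g) *\<^sub>R y + 1 *\<^sub>R z"
        have fz': "f z' = a *\<^sub>R z'"
          unfolding z'_def F scale3 by (rule eq3) (use 2 ba ca in \<open>simp_all add: field_simps\<close>)
        have fy2: "f y = a *\<^sub>R y + g *\<^sub>R v" using fy ba by simp
        have "S = span {g *\<^sub>R v + 0 *\<^sub>R y + 0 *\<^sub>R z, 0 *\<^sub>R v + 1 *\<^sub>R y + 0 *\<^sub>R z, z'}"
          using span_tri[of g 1 1 v y z 0 0 "-e/g"] 2 unfolding S z'_def by simp
        then have "S = span {g *\<^sub>R v, y, z'}" by simp
        then show ?thesis using J21_case[OF lf fgv[of g] fy2 fz'] by blast
      next
        case 3
        have fz2: "f z = a *\<^sub>R z + e *\<^sub>R v" using fz 3 ca by simp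
        have fy2: "f y = a *\<^sub>R y" using fy 3 ba by simp
        have "S = span {e *\<^sub>R v, z, y}"
          using span3_scale[of e 1 1 v y z] 3 unfolding S by (simp add: insert_commute)
        then show ?thesis using J21_case[OF lf fgv[of e] fz2 fy2] by blast
      next
        case 4
        have fz2: "f z = a *\<^sub>R z" using fz 4 ca by simp
        have fy2: "f y = a *\<^sub>R y" using fy 4 ba by simp
        show ?thesis using D_case[OF lf fv fy2 fz2 S] .
      next
        case 5
        define x where "x = e *\<^sub>R v + d *\<^sub>R y + 0 *\<^sub>R z"
        have fx: "f x = a *\<^sub>R x" unfolding x_def F scale3 by (rule eq3) (use 5 ba in \<open>simp_all add: algebra_simps\<close>)
        have fz2: "f z = a *\<^sub>R z + x" unfolding x_def using fz ca by (simp add: algebra_simps)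
        have "S = span {1 *\<^sub>R v + 0 *\<^sub>R y + 0 *\<^sub>R z, x, 0 *\<^sub>R v + 0 *\<^sub>R y + 1 *\<^sub>R z}"
          using span_tri[of 1 d 1 v y z e 0 0] 5 unfolding S x_def by simp
        then have "S = span {x, z, v}" by (simp add: insert_commute)
        then show ?thesis using J21_case[OF lf fx fz2 fv] by blast
      qed
    qed
  qed
qed



lemma cancel_nz: "(k::real) \<noteq> 0 \<Longrightarrow> k * x = k * y \<Longrightarrow> x = y" by simp

lemma block_case:
  fixes f :: "'b::real_vector \<Rightarrow> 'b"
  assumes lf: "linear f" and fv: "f v = a *\<^sub>R v"
    and f1: "f w1 = al1 *\<^sub>R v + p *\<^sub>R w1 + r *\<^sub>R w2"
    and f2: "f w2 = al2 *\<^sub>R v + q *\<^sub>R w1 + s *\<^sub>R w2"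
    and S: "S = span {v,w1,w2}"
  shows "Zero f S \<or> Good f S \<or> Bad f S"
proof -
  have F: "\<And>p1 p2 p3. f (p1 *\<^sub>R v + p2 *\<^sub>R w1 + p3 *\<^sub>R w2) =
      (a*p1 + al1*p2 + al2*p3) *\<^sub>R v + (0*p1 + p*p2 + q*p3) *\<^sub>R w1 + (0*p1 + r*p2 + s*p3) *\<^sub>R w2"
    by (rule lin3_apply[OF lf]) (simp_all add: fv f1 f2)
  define Dl where "Dl = (p-s)^2 + 4*q*r"
  show ?thesis
  proof (cases "Dl < 0")
    case True
    have rnz: "r \<noteq> 0"
    proof
      assume "r = 0" then have "Dl \<ge> 0" unfolding Dl_def by simp
      with True show False by simp
    qed
    define D0 where "D0 = (a-p)*(a-s) - q*r"
    have "4*D0 = (2*a-p-s)^2 - Dl" unfolding D0_def Dl_def by (simp add: power2_eq_square algebra_simps)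
    then have "D0 > 0" using True by (smt (verit) zero_le_power2)
    then have D0: "D0 \<noteq> 0" by simp
    define b1 where "b1 = (-al1*(a-s) - r*al2)/D0"
    define b2 where "b2 = (-(a-p)*al2 - q*al1)/D0"
    have hb1: "D0 * b1 = -al1*(a-s) - r*al2" using D0 by (simp add: b1_def)
    have hb2: "D0 * b2 = -(a-p)*al2 - q*al1" using D0 by (simp add: b2_def)
    define w1' where "w1' = b1 *\<^sub>R v + 1 *\<^sub>R w1 + 0 *\<^sub>R w2"
    define w2' where "w2' = b2 *\<^sub>R v + 0 *\<^sub>R w1 + 1 *\<^sub>R w2"
    have fw1': "f w1' = p *\<^sub>R w1' + r *\<^sub>R w2'"
    proof -
      have e1: "a*b1 + al1 = p*b1 + r*b2"
        by (rule cancel_nz[OF D0]) (use hb1 hb2 in \<open>unfold D0_def; algebra\<close>)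
      have "f w1' = (a*b1 + al1) *\<^sub>R v + p *\<^sub>R w1 + r *\<^sub>R w2" unfolding w1'_def F by (rule eq3) simp_all
      also have "\<dots> = (p*b1 + r*b2) *\<^sub>R v + p *\<^sub>R w1 + r *\<^sub>R w2" using e1 by simp
      also have "\<dots> = p *\<^sub>R w1' + r *\<^sub>R w2'" unfolding w1'_def w2'_def by (simp add: algebra_simps)
      finally show ?thesis .
    qed
    have fw2': "f w2' = q *\<^sub>R w1' + s *\<^sub>R w2'"
    proof -
      have e2: "a*b2 + al2 = q*b1 + s*b2"
        by (rule cancel_nz[OF D0]) (use hb1 hb2 in \<open>unfold D0_def; algebra\<close>)
      have "f w2' = (a*b2 + al2) *\<^sub>R v + q *\<^sub>R w1 + s *\<^sub>R w2" unfolding w2'_def F by (rule eq3) simp_all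
      also have "\<dots> = (q*b1 + s*b2) *\<^sub>R v + q *\<^sub>R w1 + s *\<^sub>R w2" using e2 by simp
      also have "\<dots> = q *\<^sub>R w1' + s *\<^sub>R w2'" unfolding w1'_def w2'_def by (simp add: algebra_simps)
      finally show ?thesis .
    qed
    have sp1: "S = span {v, w1', w2'}"
      using span_tri[of 1 1 1 v w1 w2 b1 b2 0] unfolding S w1'_def w2'_def by simp
    have F2: "\<And>p1 p2 p3. f (p1 *\<^sub>R v + p2 *\<^sub>R w1' + p3 *\<^sub>R w2') =
      (a*p1 + 0*p2 + 0*p3) *\<^sub>R v + (0*p1 + p*p2 + q*p3) *\<^sub>R w1' + (0*p1 + r*p2 + s*p3) *\<^sub>R w2'"
      by (rule lin3_apply[OF lf]) (simp_all add: fv fw1' fw2')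
    define l where "l = (p+s)/2"
    define be where "be = sqrt (-Dl)/2"
    have bepos: "be > 0" using True unfolding be_def by simp
    then have bnz: "be \<noteq> 0" by simp
    have bb: "4 * be^2 = -Dl" using True unfolding be_def by (simp add: power_divide)
    have hl: "2*l = p + s" unfolding l_def by simp
    define k1 where "k1 = -(p-l)/be"
    define k2 where "k2 = -r/be"
    have hk1: "be*k1 = -(p-l)" using bnz by (simp add: k1_def)
    have hk2: "be*k2 = -r" using bnz by (simp add: k2_def)
    have k2nz: "k2 \<noteq> 0" using rnz bnz by (simp add: k2_def)
    define u1 where "u1 = 0 *\<^sub>R v + 1 *\<^sub>R w1' + 0 *\<^sub>R w2'"
    define u2 where "u2 = 0 *\<^sub>R v + k1 *\<^sub>R w1' + k2 *\<^sub>R w2'"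
    have fu1: "f u1 = l *\<^sub>R u1 - be *\<^sub>R u2"
    proof -
      have "f u1 = 0 *\<^sub>R v + (l - be*k1) *\<^sub>R w1' + (- (be*k2)) *\<^sub>R w2'"
        unfolding u1_def F2 by (rule eq3) (simp, use hk1 in linarith, use hk2 in simp)
      also have "\<dots> = l *\<^sub>R u1 - be *\<^sub>R u2" unfolding u1_def u2_def by (simp add: algebra_simps)
      finally show ?thesis .
    qed
    have fu2: "f u2 = be *\<^sub>R u1 + l *\<^sub>R u2"
    proof -
      have c1: "p*k1 + q*k2 = be + l*k1"
        by (rule cancel_nz[OF bnz]) (use hk1 hk2 bb hl in \<open>unfold Dl_def; algebra\<close>)
      have c2: "r*k1 + s*k2 = l*k2"
        by (rule cancel_nz[OF bnz]) (use hk1 hk2 hl in algebra)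
      have "f u2 = 0 *\<^sub>R v + (be + l*k1) *\<^sub>R w1' + (l*k2) *\<^sub>R w2'"
        unfolding u2_def F2 by (rule eq3) (use c1 c2 in simp_all)
      also have "\<dots> = be *\<^sub>R u1 + l *\<^sub>R u2" unfolding u1_def u2_def by (simp add: algebra_simps)
      finally show ?thesis .
    qed
    have sp: "S = span {v, u1, u2}"
      using span_tri[of 1 1 k2 v w1' w2' 0 0 k1] k2nz unfolding sp1 u1_def u2_def by simp
    have "Good f S \<or> Bad f S" using rot_case[OF lf fv fu1 fu2 sp bnz] .
    then show ?thesis by blast
  next
    case False
    show ?thesis
    proof (cases "r = 0")
      case True
      have fy: "f w1 = p *\<^sub>R w1 + al1 *\<^sub>R v" using f1 True by (simp add: algebra_simps)
      have fz: "f w2 = s *\<^sub>R w2 + q *\<^sub>R w1 + al2 *\<^sub>R v" using f2 by (simp add: algebra_simps)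
      show ?thesis using tri_case[OF lf fv fy fz S] by blast
    next
      case rnz: False
      define mu where "mu = (p + s + sqrt Dl)/2"
      have sq: "(sqrt Dl)^2 = Dl" using False by simp
      have hmu: "2*mu = p + s + sqrt Dl" unfolding mu_def by simp
      have muq: "mu*mu - (p+s)*mu + p * s - q*r = 0"
        using hmu sq unfolding Dl_def by algebra
      define y where "y = 0 *\<^sub>R v + (mu - s) *\<^sub>R w1 + r *\<^sub>R w2"
      define z where "z = 0 *\<^sub>R v + 1 *\<^sub>R w1 + 0 *\<^sub>R w2"
      define gm where "gm = al1*(mu-s) + al2*r"
      have fy: "f y = mu *\<^sub>R y + gm *\<^sub>R v"
      proof -
        have "f y = gm *\<^sub>R v + (mu*(mu-s)) *\<^sub>R w1 + (mu*r) *\<^sub>R w2"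
          unfolding y_def F by (rule eq3) (use muq in \<open>simp_all add: gm_def algebra_simps\<close>)
        also have "\<dots> = mu *\<^sub>R y + gm *\<^sub>R v" unfolding y_def by (simp add: algebra_simps)
        finally show ?thesis .
      qed
      have fz: "f z = (p+s-mu) *\<^sub>R z + 1 *\<^sub>R y + al1 *\<^sub>R v"
      proof -
        have "f z = al1 *\<^sub>R v + (p+s-mu + (mu-s)) *\<^sub>R w1 + r *\<^sub>R w2"
          unfolding z_def F by (rule eq3) simp_all
        also have "\<dots> = (p+s-mu) *\<^sub>R z + 1 *\<^sub>R y + al1 *\<^sub>R v" unfolding y_def z_def by (simp add: algebra_simps)
        finally show ?thesis .
      qed
      have "S = span {v, z, y}"
        using span_tri[of 1 1 r v w1 w2 0 0 "mu-s"] rnz unfolding S y_def z_def by simp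
      then have sp: "S = span {v, y, z}" by (simp add: insert_commute)
      show ?thesis using tri_case[OF lf fv fy fz sp] by blast
    qed
  qed
qed



lemma ext1:
  fixes f :: "'b::real_vector \<Rightarrow> 'b"
  assumes lf: "linear f" and x1: "x1 \<noteq> 0" and fv: "f v = a *\<^sub>R v"
    and v: "v = x1 *\<^sub>R b1 + x2 *\<^sub>R b2 + x3 *\<^sub>R b3"
    and h2: "f b2 \<in> span {b1,b2,b3}" and h3: "f b3 \<in> span {b1,b2,b3}"
  shows "Zero f (span {b1,b2,b3}) \<or> Good f (span {b1,b2,b3}) \<or> Bad f (span {b1,b2,b3})"
proof -
  have "span {1 *\<^sub>R b2 + 0 *\<^sub>R b3 + 0 *\<^sub>R b1, 0 *\<^sub>R b2 + 1 *\<^sub>R b3 + 0 *\<^sub>R b1, x2 *\<^sub>R b2 + x3 *\<^sub>R b3 + x1 *\<^sub>R b1}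
     = span {b2,b3,b1}"
    using span_tri[of 1 1 x1 b2 b3 b1 0 x2 x3] x1 by simp
  moreover have "x2 *\<^sub>R b2 + x3 *\<^sub>R b3 + x1 *\<^sub>R b1 = v" unfolding v by (simp add: algebra_simps)
  ultimately have sp: "span {b1,b2,b3} = span {v,b2,b3}" by (simp add: insert_commute)
  obtain al1 p r where e2: "f b2 = al1 *\<^sub>R v + p *\<^sub>R b2 + r *\<^sub>R b3"
    using span3_coeffs[of "f b2" v b2 b3] h2 sp by auto
  obtain al2 q s where e3: "f b3 = al2 *\<^sub>R v + q *\<^sub>R b2 + s *\<^sub>R b3"
    using span3_coeffs[of "f b3" v b2 b3] h3 sp by auto
  show ?thesis using block_case[OF lf fv e2 e3 sp] .
qed

lemma core:
  fixes f :: "'b::real_vector \<Rightarrow> 'b"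
  assumes lf: "linear f"
    and h1: "f b1 \<in> span {b1,b2,b3}" and h2: "f b2 \<in> span {b1,b2,b3}" and h3: "f b3 \<in> span {b1,b2,b3}"
  shows "Zero f (span {b1,b2,b3}) \<or> Good f (span {b1,b2,b3}) \<or> Bad f (span {b1,b2,b3})"
proof -
  obtain a x1 x2 x3 where nz: "x1 \<noteq> 0 \<or> x2 \<noteq> 0 \<or> x3 \<noteq> 0"
    and fv: "f (x1 *\<^sub>R b1 + x2 *\<^sub>R b2 + x3 *\<^sub>R b3) = a *\<^sub>R (x1 *\<^sub>R b1 + x2 *\<^sub>R b2 + x3 *\<^sub>R b3)"
    using eig_span3[OF lf h1 h2 h3] by blast
  define v where "v = x1 *\<^sub>R b1 + x2 *\<^sub>R b2 + x3 *\<^sub>R b3"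
  have fv': "f v = a *\<^sub>R v" using fv unfolding v_def .
  have p1: "span {b2,b1,b3} = span {b1,b2,b3}" by (simp add: insert_commute)
  have p2: "span {b3,b1,b2} = span {b1,b2,b3}" by (simp add: insert_commute)
  from nz consider "x1 \<noteq> 0" | "x2 \<noteq> 0" | "x3 \<noteq> 0" by blast
  then show ?thesis
  proof cases
    case 1 then show ?thesis using ext1[OF lf 1 fv' v_def h2 h3] by blast
  next
    case 2
    have v2: "v = x2 *\<^sub>R b2 + x1 *\<^sub>R b1 + x3 *\<^sub>R b3" unfolding v_def by (simp add: algebra_simps)
    show ?thesis using ext1[OF lf 2 fv' v2] h1 h3 unfolding p1 by blast
  next
    case 3
    have v3: "v = x3 *\<^sub>R b3 + x1 *\<^sub>R b1 + x2 *\<^sub>R b2" unfolding v_def by (simp add: algebra_simps)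
    show ?thesis using ext1[OF lf 3 fv' v3] h1 h2 unfolding p2 by blast
  qed
qed



lemma span_insert_UNIV:
  fixes e1 :: "'a::euclidean_space"
  assumes D: "DIM('a) = 4" and sI: "subspace I" and dI: "dim I = 3" and e1: "e1 \<notin> I"
  shows "span (insert e1 I) = UNIV"
proof -
  have spI: "span I = I" using sI by (simp add: span_eq_iff)
  have "e1 \<notin> span I" unfolding spI using e1 .
  then have "dim (insert e1 I) = dim I + 1" by (simp add: dim_insert)
  then have "dim (insert e1 I) = DIM('a)" using D dI by simp
  then show ?thesis using dim_eq_full by blast
qed

definition mke :: "real \<Rightarrow> 'a \<Rightarrow> 'a \<Rightarrow> 'a \<Rightarrow> 'a \<Rightarrow> nat \<Rightarrow> 'a::real_vector" where
  "mke c e1 u2 u3 u4 = (\<lambda>i. if i = 1 then c *\<^sub>R e1 else if i = 2 then u2 else if i = 3 then u3 else u4)"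

lemma four_eq: "{1..4::nat} = {1,2,3,4}" by auto

lemma model_basis:
  fixes e1 :: "'a::euclidean_space"
  assumes D: "DIM('a) = 4" and sI: "subspace I" and dI: "dim I = 3" and e1: "e1 \<notin> I"
    and c: "c \<noteq> 0" and Ieq: "I = span {u2,u3,u4}"
  shows "inj_on (mke c e1 u2 u3 u4) {1..4} \<and> independent (mke c e1 u2 u3 u4 ` {1..4})
         \<and> span (mke c e1 u2 u3 u4 ` {1..4}) = UNIV"
proof -
  let ?e = "mke c e1 u2 u3 u4"
  let ?T = "?e ` {1..4}"
  have img: "?T = {c *\<^sub>R e1, u2, u3, u4}" unfolding four_eq by (auto simp: mke_def)
  have "e1 = (1/c) *\<^sub>R (c *\<^sub>R e1)" using c by simp
  then have e1s: "e1 \<in> span ?T" unfolding img by (metis insertI1 span_base span_scale)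
  have "I \<subseteq> span ?T" unfolding Ieq img by (rule span_mono) auto
  with e1s have "insert e1 I \<subseteq> span ?T" by blast
  then have "span (insert e1 I) \<subseteq> span ?T" by (simp add: span_minimal)
  then have spT: "span ?T = UNIV" using span_insert_UNIV[OF D sI dI e1] by auto
  have fin: "finite ?T" by simp
  have "dim (UNIV::'a set) \<le> card ?T" using dim_le_card[of UNIV ?T] spT fin by simp
  then have c4: "card ?T \<ge> 4" using D by simp
  have "card ?T \<le> card {1..4::nat}" by (rule card_image_le) simp
  then have cT: "card ?T = 4" using c4 by simp
  have inj: "inj_on ?e {1..4}" using inj_on_iff_eq_card[of "{1..4::nat}" ?e] cT by simp
  have ind: "independent ?T"
    using card_eq_dim[of ?T UNIV] cT fin spT D by simp
  show ?thesis using inj ind spT by blast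
qed

lemma sum24: "(\<Sum>k=2..4::nat. f k) = f 2 + f 3 + f (4::nat)" by (simp add: numeral_eq_Suc)

lemma NF_model:
  fixes B :: "'a::euclidean_space \<Rightarrow> 'a \<Rightarrow> 'a"
  assumes D: "DIM('a) = 4" and sI: "subspace I" and dI: "dim I = 3" and e1: "e1 \<notin> I"
    and bl: "bilinear B" and ab: "\<forall>x\<in>I. \<forall>y\<in>I. B x y = 0"
    and nf: "NF (B e1) I c u2 u3 u4 A"
  shows "is_model B A"
proof -
  from nf have c: "c \<noteq> 0" and Ieq: "I = span {u2,u3,u4}"
    and q2: "c *\<^sub>R B e1 u2 = A 2 2 *\<^sub>R u2 + A 2 3 *\<^sub>R u3 + A 2 4 *\<^sub>R u4"
    and q3: "c *\<^sub>R B e1 u3 = A 3 2 *\<^sub>R u2 + A 3 3 *\<^sub>R u3 + A 3 4 *\<^sub>R u4"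
    and q4: "c *\<^sub>R B e1 u4 = A 4 2 *\<^sub>R u2 + A 4 3 *\<^sub>R u3 + A 4 4 *\<^sub>R u4"
    unfolding NF_def by auto
  let ?e = "mke c e1 u2 u3 u4"
  have bas: "inj_on ?e {1..4} \<and> independent (?e ` {1..4}) \<and> span (?e ` {1..4}) = UNIV"
    using model_basis[OF D sI dI e1 c Ieq] .
  have uI: "u2 \<in> I" "u3 \<in> I" "u4 \<in> I" unfolding Ieq by (auto intro: span_base)
  have br: "\<forall>j\<in>{2..4}. B (?e 1) (?e j) = (\<Sum>k=2..4. A j k *\<^sub>R ?e k)"
  proof -
    have "B (?e 1) (?e j) = (\<Sum>k=2..4. A j k *\<^sub>R ?e k)" if "j \<in> {2,3,4}" for j
      using that q2 q3 q4 by (auto simp: sum24 mke_def bilinear_lmul[OF bl])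
    moreover have "{2..4::nat} = {2,3,4}" by auto
    ultimately show ?thesis by simp
  qed
  have ab2: "\<forall>i\<in>{2..4}. \<forall>j\<in>{2..4}. i < j \<longrightarrow> B (?e i) (?e j) = 0"
  proof -
    have "?e i \<in> I" if "i \<in> {2..4}" for i using that uI by (auto simp: mke_def)
    then show ?thesis using ab by blast
  qed
  show ?thesis unfolding is_model_def using bas br ab2 by blast
qed



lemma alt_antisym:
  assumes bw: "bilinear w" and alt: "\<forall>x. w x x = 0"
  shows "w x y = - w y x"
proof -
  have "w (x+y) (x+y) = w x x + w x y + (w y x + w y y)"
    by (simp add: bilinear_ladd[OF bw] bilinear_radd[OF bw])
  then show ?thesis using alt by (simp add: eq_neg_iff_add_eq_0)
qed

lemma lin_vanish:
  assumes lg: "linear g" and z: "\<forall>b\<in>T. g b = 0" and sp: "span T = UNIV"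
  shows "g y = 0"
proof -
  have "y \<in> span T" using sp by simp
  then show ?thesis using linear_eq_0_on_span[OF lg] z by blast
qed

lemma lcs_abelian:
  fixes B :: "'a::euclidean_space \<Rightarrow> 'a \<Rightarrow> 'a"
  assumes D: "DIM('a) = 4" and B0: "\<forall>x y. B x y = 0" and L: "has_LCS B"
  shows False
proof -
  obtain w :: "'a \<Rightarrow> 'a \<Rightarrow> real" and t where bw: "bilinear w" and nd: "\<forall>x. (\<forall>y. w x y = 0) \<longrightarrow> x = 0"
    and lt: "linear t" and tn: "\<exists>x. t x \<noteq> 0" and ce: "\<forall>x y z. CE_d2 B w x y z = wedge12 t w x y z"
    using L unfolding has_LCS_def by blast
  obtain x0 where tx0: "t x0 \<noteq> 0" using tn by blast
  have wz: "\<forall>x y z. wedge12 t w x y z = 0"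
    using ce B0 by (simp add: CE_d2_def bilinear_lzero[OF bw])
  define Lm where "Lm = (\<lambda>v. (t v, w x0 v))"
  have lL: "linear Lm"
    unfolding Lm_def by (rule linearI) (simp_all add: linear_add[OF lt] linear_scale[OF lt] bilinear_radd[OF bw] bilinear_rmul[OF bw])
  have "\<not> inj Lm"
  proof
    assume inj: "inj Lm"
    have "dim (Lm ` UNIV) = dim (UNIV::'a set)"
      by (rule dim_image_eq[OF lL]) (use inj in \<open>simp add: inj_on_def\<close>)
    also have "\<dots> = 4" using D by simp
    finally have "dim (Lm ` UNIV) = 4" .
    moreover have "dim (Lm ` UNIV) \<le> DIM(real \<times> real)" by (rule dim_subset_UNIV)
    ultimately show False by simp
  qed
  then obtain u v where uv: "u \<noteq> v" "Lm u = Lm v" unfolding inj_def by blast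
  define v0 where "v0 = u - v"
  have v0: "v0 \<noteq> 0" using uv by (simp add: v0_def)
  have "Lm v0 = 0" unfolding v0_def using uv linear_diff[OF lL] by simp
  then have tv0: "t v0 = 0" and wv0: "w x0 v0 = 0" unfolding Lm_def by (simp_all add: zero_prod_def)
  have "\<forall>y. w v0 y = 0"
  proof
    fix y
    have "wedge12 t w x0 v0 y = 0" using wz by blast
    then have "t x0 * w v0 y = 0" using tv0 wv0 by (simp add: wedge12_def)
    then show "w v0 y = 0" using tx0 by simp
  qed
  then show False using nd v0 by blast
qed



lemma kernel_contra:
  fixes w :: "'a::euclidean_space \<Rightarrow> 'a \<Rightarrow> real"
  assumes bw: "bilinear w" and alt: "\<forall>x. w x x = 0" and nd: "\<forall>x. (\<forall>y. w x y = 0) \<longrightarrow> x = 0"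
    and ind: "independent {E,u2,u3,u4}" and spT: "span {E,u2,u3,u4} = UNIV" and u23: "u2 \<noteq> u3"
    and w23: "w u2 u3 = 0" and w24: "w u2 u4 = 0" and w34: "w u3 u4 = 0"
  shows False
proof -
  have wl: "\<And>x. linear (w x)" using bw unfolding bilinear_def by blast
  have wsm: "\<And>k x y. w (k *\<^sub>R x) y = k * w x y" using bilinear_lmul[OF bw] by simp
  have w32: "w u3 u2 = 0" using alt_antisym[OF bw alt, of u3 u2] w23 by simp
  show False
  proof (cases "w u2 E = 0")
    case True
    have "\<forall>b\<in>{E,u2,u3,u4}. w u2 b = 0" using True w23 w24 alt by auto
    then have "\<forall>y. w u2 y = 0" using lin_vanish[OF wl _ spT] by blast
    then have "u2 = 0" using nd by blast
    moreover have "0 \<notin> {E,u2,u3,u4}"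
    proof
      assume "0 \<in> {E,u2,u3,u4}"
      then have "dependent {E,u2,u3,u4}" by (rule dependent_zero)
      with ind show False by simp
    qed
    ultimately show False by simp
  next
    case False
    define x where "x = w u3 E *\<^sub>R u2 - w u2 E *\<^sub>R u3"
    have wx: "\<And>y. w x y = w u3 E * w u2 y - w u2 E * w u3 y"
      unfolding x_def by (simp add: bilinear_lsub[OF bw] wsm)
    have "w x E = 0" "w x u2 = 0" "w x u3 = 0" "w x u4 = 0"
      unfolding wx using alt w23 w24 w34 w32 by simp_all
    then have "\<forall>b\<in>{E,u2,u3,u4}. w x b = 0" by blast
    then have "\<forall>y. w x y = 0" using lin_vanish[OF wl _ spT] by blast
    then have x0: "x = 0" using nd by blast
    have "u3 = (w u3 E / w u2 E) *\<^sub>R u2"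
    proof -
      have "w u2 E *\<^sub>R u3 = w u3 E *\<^sub>R u2" using x0 unfolding x_def by simp
      then have "(1 / w u2 E) *\<^sub>R (w u2 E *\<^sub>R u3) = (1 / w u2 E) *\<^sub>R (w u3 E *\<^sub>R u2)" by simp
      then show ?thesis using False by simp
    qed
    moreover have "u2 \<in> span ({E,u2,u3,u4} - {u3})" using u23 by (intro span_base) blast
    then have "(w u3 E / w u2 E) *\<^sub>R u2 \<in> span ({E,u2,u3,u4} - {u3})" by (rule span_scale)
    ultimately have "u3 \<in> span ({E,u2,u3,u4} - {u3})" by simp
    then have "dependent {E,u2,u3,u4}" unfolding dependent_def by blast
    then show False using ind by simp
  qed
qed

lemma bad_contra:
  fixes B :: "'a::euclidean_space \<Rightarrow> 'a \<Rightarrow> 'a"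
  assumes D: "DIM('a) = 4" and sI: "subspace I" and dI: "dim I = 3" and e1: "e1 \<notin> I"
    and bl: "bilinear B" and ab: "\<forall>x\<in>I. \<forall>y\<in>I. B x y = 0"
    and nf: "NF (B e1) I c u2 u3 u4 (r4prime m 0)" and m: "m \<noteq> 0" and L: "has_LCS B"
  shows False
proof -
  from nf have c: "c \<noteq> 0" and Ieq: "I = span {u2,u3,u4}"
    and q2: "c *\<^sub>R B e1 u2 = m *\<^sub>R u2"
    and q3: "c *\<^sub>R B e1 u3 = - u4"
    and q4: "c *\<^sub>R B e1 u4 = u3"
    unfolding NF_def by (auto simp: tbl_defs)
  let ?e = "mke c e1 u2 u3 u4"
  let ?T = "?e ` {1..4}"
  define E where "E = c *\<^sub>R e1"
  have bas: "inj_on ?e {1..4} \<and> independent ?T \<and> span ?T = UNIV"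
    using model_basis[OF D sI dI e1 c Ieq] .
  have img: "?T = {E, u2, u3, u4}" unfolding four_eq E_def by (auto simp: mke_def)
  have ind: "independent {E,u2,u3,u4}" and spT: "span {E,u2,u3,u4} = UNIV" using bas img by auto
  have u23: "u2 \<noteq> u3"
  proof
    assume "u2 = u3"
    then have "?e 2 = ?e 3" by (simp add: mke_def)
    then show False using bas unfolding inj_on_def by force
  qed
  have b2: "B E u2 = m *\<^sub>R u2" and b3: "B E u3 = - u4" and b4: "B E u4 = u3"
    using q2 q3 q4 unfolding E_def by (simp_all add: bilinear_lmul[OF bl])
  have uI: "u2 \<in> I" "u3 \<in> I" "u4 \<in> I" unfolding Ieq by (auto intro: span_base)
  have b0: "B u2 u3 = 0" "B u2 u4 = 0" "B u3 u4 = 0" using ab uI by auto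
  obtain w :: "'a \<Rightarrow> 'a \<Rightarrow> real" and t where bw: "bilinear w" and alt: "\<forall>x. w x x = 0"
    and nd: "\<forall>x. (\<forall>y. w x y = 0) \<longrightarrow> x = 0"
    and lt: "linear t" and tB: "\<forall>x y. t (B x y) = 0" and tn: "\<exists>x. t x \<noteq> 0"
    and ce: "\<forall>x y z. CE_d2 B w x y z = wedge12 t w x y z"
    using L unfolding has_LCS_def by blast
  have "t (B E u2) = 0" using tB by blast
  then have tu2: "t u2 = 0" using m by (simp add: b2 linear_scale[OF lt])
  have "t (B E u3) = 0" using tB by blast
  then have tu4: "t u4 = 0" by (simp add: b3 linear_neg[OF lt])
  have "t (B E u4) = 0" using tB by blast
  then have tu3: "t u3 = 0" by (simp add: b4)
  have a: "t E \<noteq> 0"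
  proof
    assume "t E = 0"
    then have "\<forall>b\<in>{E,u2,u3,u4}. t b = 0" using tu2 tu3 tu4 by auto
    then have "\<forall>y. t y = 0" using lin_vanish[OF lt _ spT] by blast
    then show False using tn by blast
  qed
  have wa: "\<And>x y. w x y = - w y x" using alt_antisym[OF bw alt] .
  have wl: "\<And>x. linear (w x)" using bw unfolding bilinear_def by blast
  have w0: "\<And>z. w 0 z = 0" using bilinear_lzero[OF bw] by simp
  have wsm: "\<And>k x y. w (k *\<^sub>R x) y = k * w x y" using bilinear_lmul[OF bw] by simp
  have wng: "\<And>x y. w (- x) y = - w x y" using bilinear_lneg[OF bw] by simp
  have e23: "- m * w u2 u3 + w u2 u4 = t E * w u2 u3"
    using spec[OF spec[OF spec[OF ce, of E], of u2], of u3] tu2 tu3 b2 b3 b0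
    by (simp add: CE_d2_def wedge12_def w0 wsm wng wa[of u4 u2])
  have e24: "- m * w u2 u4 - w u2 u3 = t E * w u2 u4"
    using spec[OF spec[OF spec[OF ce, of E], of u2], of u4] tu2 tu4 b2 b4 b0
    by (simp add: CE_d2_def wedge12_def w0 wsm wa[of u3 u2])
  have e34: "0 = t E * w u3 u4"
    using spec[OF spec[OF spec[OF ce, of E], of u3], of u4] tu3 tu4 b3 b4 b0 alt
    by (simp add: CE_d2_def wedge12_def w0 wng)
  have w34: "w u3 u4 = 0" using e34 a by simp
  have "w u2 u3 * (1 + (t E + m)^2) = 0" using e23 e24 by algebra
  moreover have "1 + (t E + m)^2 > 0" by (simp add: add_pos_nonneg)
  ultimately have w23: "w u2 u3 = 0" by simp
  then have w24: "w u2 u4 = 0" using e23 by simp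
  show False using kernel_contra[OF bw alt nd ind spT u23 w23 w24 w34] .
qed



lemma zero_B:
  fixes B :: "'a::euclidean_space \<Rightarrow> 'a \<Rightarrow> 'a"
  assumes D: "DIM('a) = 4" and sI: "subspace I" and dI: "dim I = 3" and e1: "e1 \<notin> I"
    and bl: "bilinear B" and altB: "\<forall>x. B x x = 0" and ab: "\<forall>x\<in>I. \<forall>y\<in>I. B x y = 0"
    and Z: "\<forall>x\<in>I. B e1 x = 0"
  shows "B x y = 0"
proof -
  have spI: "span I = I" using sI by (simp add: span_eq_iff)
  have dec: "\<exists>k i. i \<in> I \<and> z = k *\<^sub>R e1 + i" for z
  proof -
    have "z \<in> span (insert e1 I)" using span_insert_UNIV[OF D sI dI e1] by simp
    then obtain k where "z - k *\<^sub>R e1 \<in> span I" by (auto simp: span_insert)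
    then have "z - k *\<^sub>R e1 \<in> I" unfolding spI .
    moreover have "z = k *\<^sub>R e1 + (z - k *\<^sub>R e1)" by simp
    ultimately show ?thesis by blast
  qed
  obtain k i where i: "i \<in> I" and x: "x = k *\<^sub>R e1 + i" using dec by blast
  obtain k' i' where i': "i' \<in> I" and y: "y = k' *\<^sub>R e1 + i'" using dec by blast
  have as: "B i e1 = - B e1 i" using alt_antisym[OF bl altB] by blast
  have Zi: "B e1 i = 0" "B e1 i' = 0" using Z i i' by auto
  have abi: "B i i' = 0" using ab i i' by auto
  show ?thesis
    unfolding x y using altB Zi abi as by (simp add: bilinear_ladd[OF bl] bilinear_radd[OF bl] bilinear_lmul[OF bl] bilinear_rmul[OF bl])
qed

theorem theorem4p5:
  fixes B :: "'a::euclidean_space \<Rightarrow> 'a \<Rightarrow> 'a"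
  assumes "DIM('a) = 4"
    and "lie_algebra B"
    and "almost_abelian B"
    and "has_LCS B"
  shows "is_model B h3R \<or>
         is_model B n4 \<or>
         (\<exists>l. is_model B (r3R l)) \<or>
         (\<exists>m l. m * l \<noteq> 0 \<and> is_model B (r4ml m l)) \<or>
         is_model B r3R' \<or>
         (\<exists>l. is_model B (r4l l)) \<or>
         is_model B r4 \<or>
         (\<exists>l. is_model B (r3primeR l)) \<or>
         (\<exists>m l. m \<noteq> 0 \<and> l \<noteq> 0 \<and> is_model B (r4prime m l))"
proof -
  note D = assms(1)
  obtain I where sI: "subspace I" and dI0: "dim I = DIM('a) - 1" and inv: "\<forall>x\<in>I. \<forall>y. B y x \<in> I"
    and ab: "\<forall>x\<in>I. \<forall>y\<in>I. B x y = 0"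
    using assms(3) unfolding almost_abelian_def by blast
  have dI: "dim I = 3" using dI0 D by simp
  have bl: "bilinear B" and altB: "\<forall>x. B x x = 0" using assms(2) unfolding lie_algebra_def by auto
  obtain Bs where Bs: "Bs \<subseteq> I" "independent Bs" "I \<subseteq> span Bs" "card Bs = dim I" by (rule basis_exists)
  then obtain b1 b2 b3 where Bs3: "Bs = {b1,b2,b3}" using dI card_3_iff by metis
  have "span Bs \<subseteq> I" using span_minimal[OF Bs(1) sI] .
  then have Ieq: "I = span {b1,b2,b3}" using Bs(3) Bs3 by blast
  obtain e1 where e1: "e1 \<notin> I"
  proof -
    have "I \<noteq> UNIV"
    proof
      assume "I = UNIV"
      then have "dim I = DIM('a)" by simp
      then show False using dI D by simp
    qed
    then show ?thesis using that by blast
  qed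
  define f where "f = B e1"
  have lf: "linear f" using bl unfolding bilinear_def f_def by blast
  have bI: "b1 \<in> I" "b2 \<in> I" "b3 \<in> I" using Bs(1) Bs3 by auto
  have hb: "f b1 \<in> span {b1,b2,b3}" "f b2 \<in> span {b1,b2,b3}" "f b3 \<in> span {b1,b2,b3}"
    using inv bI unfolding f_def Ieq[symmetric] by auto
  have cases: "Zero f I \<or> Good f I \<or> Bad f I" using core[OF lf hb] unfolding Ieq[symmetric] .
  have M: "\<And>c u2 u3 u4 A. NF f I c u2 u3 u4 A \<Longrightarrow> is_model B A"
    using NF_model[OF D sI dI e1 bl ab] unfolding f_def by blast
  show ?thesis
  proof -
    consider "Zero f I" | "Good f I" | "Bad f I" using cases by blast
    then show ?thesis
    proof cases
      case 1
      then have Z: "\<forall>x\<in>I. B e1 x = 0" unfolding Zero_def f_def .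
      have "\<forall>x y. B x y = 0" using zero_B[OF D sI dI e1 bl altB ab Z] by blast
      then show ?thesis using lcs_abelian[OF D _ assms(4)] by blast
    next
      case 3
      then obtain c u2 u3 u4 m where "m \<noteq> 0" "NF (B e1) I c u2 u3 u4 (r4prime m 0)"
        unfolding Bad_def f_def by blast
      then show ?thesis using bad_contra[OF D sI dI e1 bl ab _ _ assms(4)] by blast
    next
      case 2
      then obtain c u2 u3 u4 where G:
         "NF f I c u2 u3 u4 h3R \<or>
         NF f I c u2 u3 u4 n4 \<or>
         (\<exists>l. NF f I c u2 u3 u4 (r3R l)) \<or>
         (\<exists>m l. m * l \<noteq> 0 \<and> NF f I c u2 u3 u4 (r4ml m l)) \<or>
         NF f I c u2 u3 u4 r3R' \<or>
         (\<exists>l. NF f I c u2 u3 u4 (r4l l)) \<or>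
         NF f I c u2 u3 u4 r4 \<or>
         (\<exists>l. NF f I c u2 u3 u4 (r3primeR l)) \<or>
         (\<exists>m l. m \<noteq> 0 \<and> l \<noteq> 0 \<and> NF f I c u2 u3 u4 (r4prime m l))"
        unfolding Good_def by blast
      show ?thesis
        using G
      proof (elim disjE exE conjE)
        assume "NF f I c u2 u3 u4 h3R" then show ?thesis using M by blast
      next
        assume "NF f I c u2 u3 u4 n4" then show ?thesis using M by blast
      next
        fix l assume "NF f I c u2 u3 u4 (r3R l)" then show ?thesis using M by blast
      next
        fix m l assume "m * l \<noteq> 0" "NF f I c u2 u3 u4 (r4ml m l)" then show ?thesis using M by blast
      next
        assume "NF f I c u2 u3 u4 r3R'" then show ?thesis using M by blast
      next
        fix l assume "NF f I c u2 u3 u4 (r4l l)" then show ?thesis using M by blast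
      next
        assume "NF f I c u2 u3 u4 r4" then show ?thesis using M by blast
      next
        fix l assume "NF f I c u2 u3 u4 (r3primeR l)" then show ?thesis using M by blast
      next
        fix m l assume "m \<noteq> 0" "l \<noteq> 0" "NF f I c u2 u3 u4 (r4prime m l)" then show ?thesis using M by blast
      qed
    qed
  qed
qed

end
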